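(* Let $X$ be a nonempty set and $f: X \to X$ a map. For $k \ge 1$ let $E^k = X - f^k(X)$, let $E = E^1$, and let $E^\infty = \bigcup_{k>0} E^k$. Suppose $E$ is finite and that there is no $K>0$ with $E^K = E^\infty$. Then there exists a point $e \in E$ such that the points $f^k(e)$, $k > 0$, all belong to $E^\infty$ and are pairwise distinct. Moreover, for any such $e$ there is a positive integer $M(e)$ such that for every $k \ge M(e)$ the equation $f(x) = f^k(e)$ has exactly one solution $x\in X$, namely $x = f^{k-1}(e)$.
   Context: $f^0=\mathrm{Id}$ and $f^{k+1} = f\circ f^k$. No topology or algebraic structure is assumed on $X$. *)

theory Defs
  imports Main
begin

definition Eset :: "'a set \<Rightarrow> ('a \<Rightarrow> 'a) \<Rightarrow> nat \<Rightarrow> 'a set" where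
  "Eset X f k = X - (f ^^ k) ` X"

definition Einf :: "'a set \<Rightarrow> ('a \<Rightarrow> 'a) \<Rightarrow> 'a set" where
  "Einf X f = (\<Union>k\<in>{0<..}. Eset X f k)"

end

theory Submission
  imports Defs
begin

lemma fp_add_app: "(f ^^ (m + n)) x = (f ^^ m) ((f ^^ n) x)"
  by (simp add: funpow_add)

lemma fp_X: "f ` X \<subseteq> X \<Longrightarrow> x \<in> X \<Longrightarrow> (f ^^ n) x \<in> X"
  by (induction n) auto

lemma img_mono: assumes "f ` X \<subseteq> X" "m \<le> n" shows "(f ^^ n) ` X \<subseteq> (f ^^ m) ` X"
proof
  fix y assume "y \<in> (f ^^ n) ` X"
  then obtain x where x: "x \<in> X" "y = (f ^^ n) x" by auto
  have "y = (f ^^ m) ((f ^^ (n - m)) x)" using x assms(2) fp_add_app[of m "n-m" f x] by simp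
  moreover have "(f ^^ (n - m)) x \<in> X" using fp_X[OF assms(1) x(1)] .
  ultimately show "y \<in> (f ^^ m) ` X" by auto
qed

lemma E_mono: "f ` X \<subseteq> X \<Longrightarrow> m \<le> n \<Longrightarrow> Eset X f m \<subseteq> Eset X f n"
  unfolding Eset_def using img_mono by blast

lemma reach: assumes "f ` X \<subseteq> X"
  shows "y \<in> X \<Longrightarrow> y \<in> (f ^^ n) ` X \<or> (\<exists>e'\<in>Eset X f 1. \<exists>i. (f ^^ i) e' = y)"
proof (induction n arbitrary: y)
  case 0 then show ?case by simp
next
  case (Suc n)
  show ?case
  proof (cases "y \<in> Eset X f 1")
    case True
    then show ?thesis by (metis funpow_0)
  next
    case False
    then obtain z where z: "z \<in> X" "y = f z" using Suc.prems unfolding Eset_def by auto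
    from Suc.IH[OF z(1)] show ?thesis
    proof
      assume "z \<in> (f ^^ n) ` X"
      then have "y \<in> (f ^^ Suc n) ` X" using z by auto
      then show ?thesis by simp
    next
      assume "\<exists>e'\<in>Eset X f 1. \<exists>i. (f ^^ i) e' = z"
      then obtain e' i where "e' \<in> Eset X f 1" "(f ^^ i) e' = z" by auto
      then have "(f ^^ Suc i) e' = y" using z by simp
      then show ?thesis using \<open>e' \<in> Eset X f 1\<close> by blast
    qed
  qed
qed

lemma orbit_finite:
  fixes f :: "'a \<Rightarrow> 'a"
  assumes "(f ^^ a) e = (f ^^ b) e" "a < b"
  shows "(f ^^ n) e \<in> (\<lambda>k. (f ^^ k) e) ` {..<b}"
proof (induction n rule: less_induct)
  case (less n)
  show ?case
  proof (cases "n < b")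
    case True then show ?thesis by auto
  next
    case False
    have "(f ^^ n) e = (f ^^ (n - b)) ((f ^^ b) e)" using False fp_add_app[of "n-b" b f e] by simp
    also have "\<dots> = (f ^^ (n - b + a)) e" using assms(1) fp_add_app[of "n-b" a f e] by simp
    finally show ?thesis using less.IH[of "n - b + a"] False assms(2) by simp
  qed
qed

lemma Einf_infinite:
  assumes "f ` X \<subseteq> X" "\<not> (\<exists>K>0. Eset X f K = Einf X f)"
  shows "infinite (Einf X f)"
proof
  assume fin: "finite (Einf X f)"
  have "\<forall>y\<in>Einf X f. \<exists>k>0. y \<in> Eset X f k" unfolding Einf_def by auto
  then obtain g where g: "\<forall>y\<in>Einf X f. g y > 0 \<and> y \<in> Eset X f (g y)" by metis
  define K where "K = Max (insert 1 (g ` Einf X f))"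
  have "1 \<le> K" unfolding K_def using fin by (intro Max_ge) auto
  then have K0: "K > 0" by simp
  have "Einf X f \<subseteq> Eset X f K"
  proof
    fix y assume y: "y \<in> Einf X f"
    have "g y \<le> K" unfolding K_def using fin y by simp
    then show "y \<in> Eset X f K" using E_mono[OF assms(1)] g y by blast
  qed
  moreover have "Eset X f K \<subseteq> Einf X f" unfolding Einf_def using K0 by auto
  ultimately show False using assms(2) K0 by blast
qed

lemma back_closed:
  assumes "f ` X \<subseteq> X" "e \<in> X" "(f ^^ k) e \<in> Einf X f" "j \<le> k"
  shows "(f ^^ j) e \<in> Einf X f"
proof -
  obtain n where n: "n > 0" "(f ^^ k) e \<in> Eset X f n" using assms(3) unfolding Einf_def by auto
  have "(f ^^ j) e \<notin> (f ^^ n) ` X"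
  proof
    assume "(f ^^ j) e \<in> (f ^^ n) ` X"
    then obtain x where x: "x \<in> X" "(f ^^ j) e = (f ^^ n) x" by auto
    have "(f ^^ k) e = (f ^^ (k - j)) ((f ^^ j) e)" using assms(4) fp_add_app[of "k-j" j f e] by simp
    also have "\<dots> = (f ^^ (k - j + n)) x" using x fp_add_app[of "k-j" n f x] by simp
    finally have "(f ^^ k) e \<in> (f ^^ n) ` X"
      using img_mono[OF assms(1), of n "k - j + n"] x(1) by auto
    then show False using n(2) unfolding Eset_def by auto
  qed
  then have "(f ^^ j) e \<in> Eset X f n" unfolding Eset_def using fp_X[OF assms(1,2)] by auto
  then show ?thesis unfolding Einf_def using n(1) by auto
qed

lemma part1:
  assumes "f ` X \<subseteq> X" "finite (Eset X f 1)" "\<not> (\<exists>K>0. Eset X f K = Einf X f)"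
  shows "\<exists>e\<in>Eset X f 1. (\<forall>k>0. (f ^^ k) e \<in> Einf X f) \<and> inj_on (\<lambda>k. (f ^^ k) e) {0<..}"
proof -
  have inf: "infinite (Einf X f)" using Einf_infinite[OF assms(1,3)] .
  have sub: "Einf X f \<subseteq> (\<Union>e'\<in>Eset X f 1. Einf X f \<inter> range (\<lambda>i. (f ^^ i) e'))"
  proof
    fix y assume y: "y \<in> Einf X f"
    then obtain n where "n > 0" "y \<in> Eset X f n" unfolding Einf_def by auto
    then have "y \<in> X" "y \<notin> (f ^^ n) ` X" unfolding Eset_def by auto
    then obtain e' i where "e' \<in> Eset X f 1" "(f ^^ i) e' = y" using reach[OF assms(1), of y n] by blast
    then show "y \<in> (\<Union>e'\<in>Eset X f 1. Einf X f \<inter> range (\<lambda>i. (f ^^ i) e'))" using y by blast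
  qed
  have infU: "infinite (\<Union>e'\<in>Eset X f 1. Einf X f \<inter> range (\<lambda>i. (f ^^ i) e'))"
  proof
    assume "finite (\<Union>e'\<in>Eset X f 1. Einf X f \<inter> range (\<lambda>i. (f ^^ i) e'))"
    then have "finite (Einf X f)" using sub by (rule finite_subset[rotated])
    then show False using inf by contradiction
  qed
  have "\<not> (\<forall>e'\<in>Eset X f 1. finite (Einf X f \<inter> range (\<lambda>i. (f ^^ i) e')))"
  proof
    assume "\<forall>e'\<in>Eset X f 1. finite (Einf X f \<inter> range (\<lambda>i. (f ^^ i) e'))"
    then have "finite (\<Union>e'\<in>Eset X f 1. Einf X f \<inter> range (\<lambda>i. (f ^^ i) e'))"
      using assms(2) by (intro finite_UN_I) auto
    then show False using infU by contradiction
  qed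
  then obtain e where e: "e \<in> Eset X f 1" "infinite (Einf X f \<inter> range (\<lambda>i. (f ^^ i) e))"
    by blast
  have eX: "e \<in> X" using e(1) unfolding Eset_def by auto
  have inj: "inj_on (\<lambda>k. (f ^^ k) e) {0<..}"
  proof (rule ccontr)
    assume "\<not> ?thesis"
    then obtain a0 b0 where ab0: "a0 \<noteq> b0" "(f ^^ a0) e = (f ^^ b0) e" unfolding inj_on_def by auto
    obtain a b where ab: "(f ^^ a) e = (f ^^ b) e" "a < b"
    proof (cases "a0 < b0")
      case True then show ?thesis using that ab0 by blast
    next
      case False then have "b0 < a0" using ab0(1) by simp
      then show ?thesis using that ab0(2)[symmetric] by blast
    qed
    have "range (\<lambda>i. (f ^^ i) e) \<subseteq> (\<lambda>k. (f ^^ k) e) ` {..<b}"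
    proof
      fix y assume "y \<in> range (\<lambda>i. (f ^^ i) e)"
      then obtain n where "y = (f ^^ n) e" by blast
      then show "y \<in> (\<lambda>k. (f ^^ k) e) ` {..<b}" using orbit_finite[OF ab] by simp
    qed
    then have "finite (range (\<lambda>i. (f ^^ i) e))" by (rule finite_subset) simp
    then have "finite (Einf X f \<inter> range (\<lambda>i. (f ^^ i) e))" by (intro finite_Int disjI2)
    then show False using e(2) by simp
  qed
  have all: "\<forall>k>0. (f ^^ k) e \<in> Einf X f"
  proof (intro allI impI)
    fix k :: nat assume "k > 0"
    have "\<not> (Einf X f \<inter> range (\<lambda>i. (f ^^ i) e) \<subseteq> (\<lambda>i. (f ^^ i) e) ` {..<k})"
    proof
      assume "Einf X f \<inter> range (\<lambda>i. (f ^^ i) e) \<subseteq> (\<lambda>i. (f ^^ i) e) ` {..<k}"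
      then have "finite (Einf X f \<inter> range (\<lambda>i. (f ^^ i) e))" by (rule finite_subset) simp
      then show False using e(2) by simp
    qed
    then obtain y where y: "y \<in> Einf X f" "y \<in> range (\<lambda>i. (f ^^ i) e)" "y \<notin> (\<lambda>i. (f ^^ i) e) ` {..<k}"
      by blast
    then obtain m where ym: "y = (f ^^ m) e" by blast
    have "\<not> m < k" using y(3) ym by blast
    then have m: "(f ^^ m) e \<in> Einf X f" "m \<ge> k" using y(1) ym by auto
    show "(f ^^ k) e \<in> Einf X f" using back_closed[OF assms(1) eX m(1) m(2)] .
  qed
  show ?thesis using e(1) inj all by blast
qed

lemma witness_unique:
  fixes f :: "'a \<Rightarrow> 'a"
  assumes inj: "inj_on (\<lambda>k. (f ^^ k) e) {0<..}"
    and k: "k1 > 0" "k2 > 0" "k1 < k2"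
    and h1: "(f ^^ Suc i1) e' = (f ^^ k1) e"
    and h2: "(f ^^ Suc i2) e' = (f ^^ k2) e" "(f ^^ i2) e' \<noteq> (f ^^ (k2 - 1)) e"
  shows False
proof -
  have "(f ^^ (Suc i1 + Suc i2)) e' = (f ^^ (Suc i1 + k2)) e"
    using fp_add_app[of "Suc i1" "Suc i2" f e'] fp_add_app[of "Suc i1" k2 f e] h2(1) by simp
  moreover have "(f ^^ (Suc i1 + Suc i2)) e' = (f ^^ (Suc i2 + k1)) e"
    using fp_add_app[of "Suc i2" "Suc i1" f e'] fp_add_app[of "Suc i2" k1 f e] h1
    by (simp add: add.commute)
  ultimately have eq: "(f ^^ (Suc i1 + k2)) e = (f ^^ (Suc i2 + k1)) e" by simp
  have "Suc i1 + k2 = Suc i2 + k1" by (rule inj_onD[OF inj eq]) auto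
  then have i2: "i2 = Suc i1 + (k2 - k1 - 1)" using k by simp
  have "(f ^^ i2) e' = (f ^^ (k2 - k1 - 1)) ((f ^^ Suc i1) e')"
    using i2 fp_add_app[of "k2 - k1 - 1" "Suc i1" f e'] by (simp add: add.commute)
  also have "\<dots> = (f ^^ (k2 - 1)) e" using h1 fp_add_app[of "k2 - k1 - 1" k1 f e] k by simp
  finally show False using h2(2) by simp
qed

lemma part2:
  assumes "f ` X \<subseteq> X" "finite (Eset X f 1)" "e \<in> Eset X f 1"
    and all: "\<forall>k>0. (f ^^ k) e \<in> Einf X f" and inj: "inj_on (\<lambda>k. (f ^^ k) e) {0<..}"
  shows "\<exists>M>0. \<forall>k\<ge>M. {x\<in>X. f x = (f ^^ k) e} = {(f ^^ (k - 1)) e}"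
proof -
  have eX: "e \<in> X" using assms(3) unfolding Eset_def by auto
  define B where "B = {k. k > 0 \<and> (\<exists>x\<in>X. f x = (f ^^ k) e \<and> x \<noteq> (f ^^ (k - 1)) e)}"
  define P where "P = (\<lambda>k e'. e' \<in> Eset X f 1 \<and> (\<exists>i. (f ^^ Suc i) e' = (f ^^ k) e \<and> (f ^^ i) e' \<noteq> (f ^^ (k - 1)) e))"
  have wit: "\<exists>e'. P k e'" if kB: "k \<in> B" for k
  proof -
    obtain x where x: "k > 0" "x \<in> X" "f x = (f ^^ k) e" "x \<noteq> (f ^^ (k - 1)) e"
      using kB unfolding B_def mem_Collect_eq by blast
    obtain m where m: "m > 0" "(f ^^ k) e \<in> Eset X f m" using all x(1) unfolding Einf_def by auto
    have "x \<notin> (f ^^ (m - 1)) ` X"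
    proof
      assume "x \<in> (f ^^ (m - 1)) ` X"
      then obtain z where "z \<in> X" "x = (f ^^ (m - 1)) z" by auto
      then have "(f ^^ k) e = (f ^^ Suc (m - 1)) z" using x(3) by simp
      then have "(f ^^ k) e \<in> (f ^^ m) ` X" using m(1) \<open>z \<in> X\<close> by simp
      then show False using m(2) unfolding Eset_def by auto
    qed
    then obtain e' i where ei: "e' \<in> Eset X f 1" "(f ^^ i) e' = x" using reach[OF assms(1) x(2)] by blast
    then have "(f ^^ Suc i) e' = (f ^^ k) e" using x(3) by simp
    then show ?thesis unfolding P_def using ei x(4) by blast
  qed
  define w where "w = (\<lambda>k. SOME e'. P k e')"
  have wP: "P k (w k)" if "k \<in> B" for k unfolding w_def using someI_ex[OF wit[OF that]] .
  have "inj_on w B"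
  proof (rule inj_onI)
    fix k1 k2 assume k: "k1 \<in> B" "k2 \<in> B" "w k1 = w k2"
    have p1: "P k1 (w k1)" using wP k(1) by blast
    have p2: "P k2 (w k1)" using wP[OF k(2)] k(3) by simp
    have pos: "k1 > 0" "k2 > 0" using k unfolding B_def by auto
    show "k1 = k2"
    proof (rule ccontr)
      assume "k1 \<noteq> k2"
      from p1 obtain i1 where i1: "(f ^^ Suc i1) (w k1) = (f ^^ k1) e" "(f ^^ i1) (w k1) \<noteq> (f ^^ (k1 - 1)) e"
        unfolding P_def by blast
      from p2 obtain i2 where i2: "(f ^^ Suc i2) (w k1) = (f ^^ k2) e" "(f ^^ i2) (w k1) \<noteq> (f ^^ (k2 - 1)) e"
        unfolding P_def by blast
      consider "k1 < k2" | "k2 < k1" using \<open>k1 \<noteq> k2\<close> by linarith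
      then show False
      proof cases
        case 1 show False by (rule witness_unique[OF inj pos 1 i1(1) i2(1) i2(2)])
      next
        case 2 show False by (rule witness_unique[OF inj pos(2,1) 2 i2(1) i1(1) i1(2)])
      qed
    qed
  qed
  have "w ` B \<subseteq> Eset X f 1" using wP unfolding P_def by blast
  then have "finite (w ` B)" using assms(2) by (rule finite_subset)
  then have finB: "finite B" using \<open>inj_on w B\<close> by (rule finite_imageD)
  define M where "M = Suc (Max (insert 0 B))"
  have "\<forall>k\<ge>M. {x\<in>X. f x = (f ^^ k) e} = {(f ^^ (k - 1)) e}"
  proof (intro allI impI)
    fix k assume kM: "k \<ge> M"
    have "k \<notin> B"
    proof
      assume "k \<in> B"
      then have "k \<le> Max (insert 0 B)" using finB by (intro Max_ge) auto
      then show False using kM unfolding M_def by simp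
    qed
    have k0: "k > 0" using kM unfolding M_def by simp
    have uniq: "x = (f ^^ (k - 1)) e" if "x \<in> X" "f x = (f ^^ k) e" for x
    proof (rule ccontr)
      assume "x \<noteq> (f ^^ (k - 1)) e"
      then have "k \<in> B" unfolding B_def mem_Collect_eq using k0 that by blast
      then show False using \<open>k \<notin> B\<close> by contradiction
    qed
    have "f ((f ^^ (k - 1)) e) = (f ^^ Suc (k - 1)) e" by simp
    also have "Suc (k - 1) = k" using k0 by simp
    finally have "f ((f ^^ (k - 1)) e) = (f ^^ k) e" .
    moreover have "(f ^^ (k - 1)) e \<in> X" using fp_X[OF assms(1) eX] .
    ultimately show "{x\<in>X. f x = (f ^^ k) e} = {(f ^^ (k - 1)) e}" using uniq by blast
  qed
  moreover have "M > 0" unfolding M_def by simp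
  ultimately show ?thesis by blast
qed

theorem lemma1:
  fixes X :: "'a set" and f :: "'a \<Rightarrow> 'a"
  assumes "X \<noteq> {}"
    and "f ` X \<subseteq> X"
    and "finite (Eset X f 1)"
    and "\<not> (\<exists>K>0. Eset X f K = Einf X f)"
  shows "(\<exists>e\<in>Eset X f 1. (\<forall>k>0. (f ^^ k) e \<in> Einf X f)
            \<and> inj_on (\<lambda>k. (f ^^ k) e) {0<..})
    \<and> (\<forall>e\<in>Eset X f 1. ((\<forall>k>0. (f ^^ k) e \<in> Einf X f)
            \<and> inj_on (\<lambda>k. (f ^^ k) e) {0<..})
         \<longrightarrow> (\<exists>M>0. \<forall>k\<ge>M. {x\<in>X. f x = (f ^^ k) e} = {(f ^^ (k - 1)) e}))"
proof (intro conjI ballI impI)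
  show "\<exists>e\<in>Eset X f 1. (\<forall>k>0. (f ^^ k) e \<in> Einf X f) \<and> inj_on (\<lambda>k. (f ^^ k) e) {0<..}"
    by (rule part1[OF assms(2,3,4)])
next
  fix e assume e: "e \<in> Eset X f 1" and h: "(\<forall>k>0. (f ^^ k) e \<in> Einf X f) \<and> inj_on (\<lambda>k. (f ^^ k) e) {0<..}"
  show "\<exists>M>0. \<forall>k\<ge>M. {x\<in>X. f x = (f ^^ k) e} = {(f ^^ (k - 1)) e}"
    using part2[OF assms(2,3) e conjunct1[OF h] conjunct2[OF h]] .
qed

end
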